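(* Let $\vec f$ be a classical solution of (AP), (LP) or (JP) with smooth initial curve satisfying $A(0)>0$, whose maximal existence time $T$ is finite. Assume \[ \limsup_{t\to T^-}\max_{s\in\mathbb R/L(t)\mathbb Z}\kappa(s,t)=\infty . \] Then for all $t\in[0,T)$, \[ \max_{s\in\mathbb R/L(t)\mathbb Z}\kappa(s,t)\ge\frac{1}{\sqrt{2(T-t)}} . \]
   Context: Fix an integer $n\ge1$. For a closed plane curve $\vec f:\mathbb{R}/L\mathbb{Z}\to\mathbb{R}^2$ parametrized by arc length $s$ ($L>0$ its length): $\vec\nu$ is $\partial_s\vec f$ rotated counterclockwise by $\pi/2$, $\kappa=\partial_s^2\vec f\cdot\vec\nu$, rotation number $n=\frac1{2\pi}\int_0^L\kappa\,ds$, $A=-\frac12\int_0^L\vec f\cdot\vec\nu\,ds$, $\tilde\kappa=\kappa-\frac1L\int_0^L\kappa\,ds$. A classical solution on $[0,T)$ is a smooth family $\vec f(\cdot,t)$ of closed curves with rotation number $n$, each parametrized by arc length on $\mathbb{R}/L(t)\mathbb{Z}$, satisfying $\partial_t\vec f=(\tilde\kappa-g/L)\vec\nu$, where $g$ is one of: (AP) $g\equiv0$; (LP) $g=L\left(\int_0^L\kappa\,ds\right)^{-1}\int_0^L\tilde\kappa^2\,ds$; (JP) $g=\frac{L^2}{2A}-\int_0^L\kappa\,ds$; $T$ is the maximal existence time. *)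

theory Defs
  imports "HOL-Analysis.Analysis"
begin

text \<open>Plane curves are complex-valued (the plane R^2 is identified with C, so that
  rotation counterclockwise by pi/2 is multiplication by i and the Euclidean inner
  product is the real inner product on complex).  A time-dependent closed curve is a
  function f u t, 1-periodic in the parameter u; arc-length quantities are obtained
  via ds = |f_u| du.\<close>

datatype flow_variant = AP | LP | JP

definition smooth_family :: "real \<Rightarrow> (real \<Rightarrow> real \<Rightarrow> complex) \<Rightarrow> bool" where
  "smooth_family T f \<longleftrightarrow>
     (\<exists>P :: nat \<Rightarrow> nat \<Rightarrow> real \<Rightarrow> real \<Rightarrow> complex.
        P 0 0 = f \<and>
        (\<forall>i j. continuous_on (UNIV \<times> {0..<T}) (\<lambda>(u,t). P i j u t)) \<and>
        (\<forall>i j u t. t \<in> {0..<T} \<longrightarrow>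
            ((\<lambda>x. P i j x t) has_vector_derivative P (Suc i) j u t) (at u)) \<and>
        (\<forall>i j u t. t \<in> {0..<T} \<longrightarrow>
            ((\<lambda>s. P i j u s) has_vector_derivative P i (Suc j) u t) (at t within {0..<T})))"

definition fu :: "(real \<Rightarrow> real \<Rightarrow> complex) \<Rightarrow> real \<Rightarrow> real \<Rightarrow> complex" where
  "fu f u t = vector_derivative (\<lambda>x. f x t) (at u)"

definition fuu :: "(real \<Rightarrow> real \<Rightarrow> complex) \<Rightarrow> real \<Rightarrow> real \<Rightarrow> complex" where
  "fuu f u t = vector_derivative (\<lambda>x. fu f x t) (at u)"

definition normal :: "(real \<Rightarrow> real \<Rightarrow> complex) \<Rightarrow> real \<Rightarrow> real \<Rightarrow> complex" where
  "normal f u t = \<i> * (fu f u t / complex_of_real (norm (fu f u t)))"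

text \<open>kappa = d_s^2 f . nu, with d_s = |f_u|^{-1} d_u (tangential part drops out).\<close>
definition curvature :: "(real \<Rightarrow> real \<Rightarrow> complex) \<Rightarrow> real \<Rightarrow> real \<Rightarrow> real" where
  "curvature f u t = (fuu f u t \<bullet> normal f u t) / (norm (fu f u t))\<^sup>2"

definition curve_length :: "(real \<Rightarrow> real \<Rightarrow> complex) \<Rightarrow> real \<Rightarrow> real" where
  "curve_length f t = integral {0..1} (\<lambda>u. norm (fu f u t))"

definition total_curvature :: "(real \<Rightarrow> real \<Rightarrow> complex) \<Rightarrow> real \<Rightarrow> real" where
  "total_curvature f t = integral {0..1} (\<lambda>u. curvature f u t * norm (fu f u t))"

definition area :: "(real \<Rightarrow> real \<Rightarrow> complex) \<Rightarrow> real \<Rightarrow> real" where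
  "area f t = - (1/2) * integral {0..1} (\<lambda>u. (f u t \<bullet> normal f u t) * norm (fu f u t))"

definition curv_tilde :: "(real \<Rightarrow> real \<Rightarrow> complex) \<Rightarrow> real \<Rightarrow> real \<Rightarrow> real" where
  "curv_tilde f u t = curvature f u t - total_curvature f t / curve_length f t"

definition g_term :: "flow_variant \<Rightarrow> (real \<Rightarrow> real \<Rightarrow> complex) \<Rightarrow> real \<Rightarrow> real" where
  "g_term v f t = (case v of
      AP \<Rightarrow> 0
    | LP \<Rightarrow> curve_length f t / total_curvature f t *
             integral {0..1} (\<lambda>u. (curv_tilde f u t)\<^sup>2 * norm (fu f u t))
    | JP \<Rightarrow> (curve_length f t)\<^sup>2 / (2 * area f t) - total_curvature f t)"

definition classical_solution ::
    "flow_variant \<Rightarrow> nat \<Rightarrow> (real \<Rightarrow> real \<Rightarrow> complex) \<Rightarrow> real \<Rightarrow> bool" where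
  "classical_solution v n f T \<longleftrightarrow>
     0 < T \<and> smooth_family T f \<and>
     (\<forall>u t. t \<in> {0..<T} \<longrightarrow> f (u + 1) t = f u t) \<and>
     (\<forall>u t. t \<in> {0..<T} \<longrightarrow> fu f u t \<noteq> 0) \<and>
     (\<forall>t \<in> {0..<T}. total_curvature f t = 2 * pi * real n) \<and>
     (\<forall>u t. t \<in> {0..<T} \<longrightarrow>
        ((\<lambda>s. f u s) has_vector_derivative
           complex_of_real (curv_tilde f u t - g_term v f t / curve_length f t) * normal f u t)
        (at t within {0..<T}))"

definition maximal_solution ::
    "flow_variant \<Rightarrow> nat \<Rightarrow> (real \<Rightarrow> real \<Rightarrow> complex) \<Rightarrow> real \<Rightarrow> bool" where
  "maximal_solution v n f T \<longleftrightarrow>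
     classical_solution v n f T \<and>
     \<not> (\<exists>T' h. T < T' \<and> classical_solution v n h T' \<and>
              (\<forall>u t. t \<in> {0..<T} \<longrightarrow> h u t = f u t))"

definition max_curvature :: "(real \<Rightarrow> real \<Rightarrow> complex) \<Rightarrow> real \<Rightarrow> real" where
  "max_curvature f t = (SUP u\<in>{0..1}. curvature f u t)"

end

theory Submission
  imports Defs
begin


lemma second_deriv_max:
  fixes V V' :: "real \<Rightarrow> real"
  assumes dV: "\<And>x. (V has_real_derivative V' x) (at x)"
    and dV': "(V' has_real_derivative D) (at u)"
    and mx: "\<And>x. V x \<le> V u"
  shows "D \<le> 0"
proof (rule ccontr)
  assume "\<not> D \<le> 0" hence D: "D > 0" by simp
  have "V' u = 0" using DERIV_local_max[OF dV[of u], of 1] mx by auto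
  from DERIV_pos_inc_right[OF dV' D] obtain d where d: "d > 0"
    and inc: "\<And>h. h > 0 \<Longrightarrow> h < d \<Longrightarrow> V' u < V' (u + h)" by auto
  have "u < u + d/2" using d by simp
  from MVT2[OF this, of V V'] dV obtain z where z: "u < z" "z < u + d/2"
    "V (u + d/2) - V u = (u + d/2 - u) * V' z" by blast
  have "V' z > 0" using inc[of "z - u"] z \<open>V' u = 0\<close> d by auto
  hence "(u + d/2 - u) * V' z > 0" using d by simp
  hence "V (u + d/2) - V u > 0" using z by linarith
  thus False using mx[of "u + d/2"] by simp
qed

lemma periodic_deriv:
  fixes g g' :: "real \<Rightarrow> 'a::real_normed_vector"
  assumes per: "\<And>x. g (x + 1) = g x"
    and d: "\<And>x. (g has_vector_derivative g' x) (at x)"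
  shows "g' (x + 1) = g' x"
proof -
  have "((\<lambda>y. g (y + 1)) has_vector_derivative g' (x + 1)) (at x)"
  proof -
    have "((\<lambda>y. y + 1) has_vector_derivative 1) (at x)"
      by (auto intro!: derivative_eq_intros)
    from vector_diff_chain_at[OF this d[of "x+1"]] show ?thesis by (simp add: o_def)
  qed
  hence "(g has_vector_derivative g' (x + 1)) (at x)" using per by simp
  thus ?thesis using d[of x] vector_derivative_unique_within[of x UNIV] by (metis at_neq_bot)
qed

lemma alg2:
  fixes w1 w2 a1 a2 b1 b2 h h1 h2 r g1 g2 k1 k2 :: real
  assumes r: "r > 0" "r^2 = w1^2 + w2^2"
   and V1: "h1 * r + h * ((w1*a1+w2*a2)/r) = 0"
   and g: "g1 = -(h1*w2 + h*a2)" "g2 = h1*w1 + h*a1"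
   and k: "k1 = -(h2*w2 + 2*h1*a2 + h*b2)" "k2 = h2 * w1 + 2*h1*a1 + h*b1"
  shows "((g1*a2 - g2*a1) + (w1*k2 - w2*k1))/r^3 - 3*(w1*a2 - w2*a1)*(w1*g1+w2*g2)/r^5
       = (h2 * r + 2*h1*((w1*a1+w2*a2)/r) + h * (((a1^2+a2^2+w1*b1+w2*b2) - ((w1*a1+w2*a2)/r)^2)/r)) / r^2
         + ((w1*a2 - w2*a1)/r^3)^2 * (h*r)"
proof -
  have h1: "h1 * r^2 = - h * (w1*a1+w2*a2)" using V1 r by (simp add: field_simps power2_eq_square)
  show ?thesis unfolding g k using r(1)
    apply (simp add: field_simps)
    using h1 r(2) by algebra
qed

definition cr :: "complex \<Rightarrow> complex \<Rightarrow> real" where "cr a b = Re a * Im b - Im a * Re b"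
definition dt :: "complex \<Rightarrow> complex \<Rightarrow> real" where "dt a b = Re a * Re b + Im a * Im b"

lemma kapf_eq: "(A \<bullet> (\<i> * (W / complex_of_real (norm W)))) / (norm W)^2 = cr W A / (norm W)^3"
proof (cases "norm W = 0")
  case True then show ?thesis by simp
next
  case False
  then show ?thesis by (simp add: inner_complex_def cr_def field_simps power2_eq_square power3_eq_cube)
qed



lemma spatial:
  fixes W A B F G H :: "real \<Rightarrow> complex" and K :: "real \<Rightarrow> real" and c u1 :: real
  assumes dW: "\<And>x. (W has_vector_derivative A x) (at x)"
    and dA: "\<And>x. (A has_vector_derivative B x) (at x)"
    and dF: "\<And>x. (F has_vector_derivative G x) (at x)"
    and dG: "\<And>x. (G has_vector_derivative H x) (at x)"
    and nz: "\<And>x. W x \<noteq> 0"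
    and flow: "\<And>x. F x = complex_of_real (K x - c) * (\<i> * (W x / complex_of_real (norm (W x))))"
    and Kdef: "\<And>x. K x = cr (W x) (A x) / (norm (W x))^3"
    and mx: "\<And>x. K x \<le> K u1"
  shows "(cr (G u1) (A u1) + cr (W u1) (H u1)) / norm (W u1) ^ 3
          - 3 * cr (W u1) (A u1) * dt (W u1) (G u1) / norm (W u1) ^ 5 \<le> (K u1)^2 * (K u1 - c)"
proof -
  define w1 where "w1 x = Re (W x)" for x
  define w2 where "w2 x = Im (W x)" for x
  define a1 where "a1 x = Re (A x)" for x
  define a2 where "a2 x = Im (A x)" for x
  define b1 where "b1 x = Re (B x)" for x
  define b2 where "b2 x = Im (B x)" for x
  define f1 where "f1 x = Re (F x)" for x
  define f2 where "f2 x = Im (F x)" for x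
  define g1 where "g1 x = Re (G x)" for x
  define g2 where "g2 x = Im (G x)" for x
  define k1 where "k1 x = Re (H x)" for x
  define k2 where "k2 x = Im (H x)" for x
  have dw1: "(w1 has_real_derivative a1 x) (at x)" for x
    unfolding w1_def a1_def by (rule has_field_derivative_Re[OF dW])
  have dw2: "(w2 has_real_derivative a2 x) (at x)" for x
    unfolding w2_def a2_def by (rule has_field_derivative_Im[OF dW])
  have da1: "(a1 has_real_derivative b1 x) (at x)" for x
    unfolding b1_def a1_def by (rule has_field_derivative_Re[OF dA])
  have da2: "(a2 has_real_derivative b2 x) (at x)" for x
    unfolding b2_def a2_def by (rule has_field_derivative_Im[OF dA])
  have df1: "(f1 has_real_derivative g1 x) (at x)" for x
    unfolding f1_def g1_def by (rule has_field_derivative_Re[OF dF])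
  have df2: "(f2 has_real_derivative g2 x) (at x)" for x
    unfolding f2_def g2_def by (rule has_field_derivative_Im[OF dF])
  have dg1: "(g1 has_real_derivative k1 x) (at x)" for x
    unfolding k1_def g1_def by (rule has_field_derivative_Re[OF dG])
  have dg2: "(g2 has_real_derivative k2 x) (at x)" for x
    unfolding k2_def g2_def by (rule has_field_derivative_Im[OF dG])
  define q where "q x = w1 x ^ 2 + w2 x ^ 2" for x
  define r where "r x = sqrt (q x)" for x
  have nW: "norm (W x) = r x" for x
    unfolding r_def q_def w1_def w2_def by (simp add: cmod_def)
  have qpos: "q x > 0" for x
    using nz[of x] unfolding q_def w1_def w2_def
    by (metis complex_eq_iff sum_power2_gt_zero_iff zero_complex.simps)
  have rpos: "r x > 0" for x unfolding r_def using qpos by simp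
  have rq: "r x ^ 2 = q x" for x unfolding r_def using qpos[of x] by simp
  have f1eq: "f1 x = - (K x - c) * w2 x / r x" for x
    unfolding f1_def w2_def using flow[of x] nW[of x] by (simp add: Re_divide_of_real field_simps)
  have f2eq: "f2 x = (K x - c) * w1 x / r x" for x
    unfolding f2_def w1_def using flow[of x] nW[of x] by (simp add: Im_divide_of_real)
  define h where "h x = (f2 x * w1 x - f1 x * w2 x) / q x" for x
  have hK: "K x - c = h x * r x" for x
  proof -
    have "f2 x * w1 x - f1 x * w2 x = (K x - c) / r x * q x"
      unfolding f1eq f2eq q_def by (simp add: algebra_simps power2_eq_square add_divide_distrib diff_divide_distrib)
    hence "h x = (K x - c) / r x" unfolding h_def using qpos[of x] by simp
    thus ?thesis using rpos[of x] by simp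
  qed
  have f1h: "f1 x = - h x * w2 x" for x
    using f1eq[of x] hK[of x] rpos[of x] by simp
  have f2h: "f2 x = h x * w1 x" for x
    using f2eq[of x] hK[of x] rpos[of x] by simp
  define h1 where "h1 x = ((g2 x * w1 x + f2 x * a1 x - g1 x * w2 x - f1 x * a2 x) * q x
      - (f2 x * w1 x - f1 x * w2 x) * (2*(w1 x * a1 x + w2 x * a2 x))) / (q x)^2" for x
  define h1 where "h1 x = ((g2 x * w1 x + f2 x * a1 x - g1 x * w2 x - f1 x * a2 x) * q x
      - (f2 x * w1 x - f1 x * w2 x) * (2*(w1 x * a1 x + w2 x * a2 x))) / (q x * q x)" for x
  have dq: "(q has_real_derivative (2*(w1 x * a1 x + w2 x * a2 x))) (at x)" for x
  proof -
    have "((\<lambda>x. w1 x * w1 x + w2 x * w2 x) has_real_derivative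
        (a1 x * w1 x + a1 x * w1 x) + (a2 x * w2 x + a2 x * w2 x)) (at x)"
      by (intro DERIV_add DERIV_mult dw1 dw2)
    thus ?thesis unfolding q_def by (simp add: power2_eq_square algebra_simps)
  qed
  have dN: "((\<lambda>x. f2 x * w1 x - f1 x * w2 x) has_real_derivative
      (g2 x * w1 x + f2 x * a1 x - g1 x * w2 x - f1 x * a2 x)) (at x)" for x
  proof -
    have "((\<lambda>x. f2 x * w1 x - f1 x * w2 x) has_real_derivative
        (g2 x * w1 x + a1 x * f2 x) - (g1 x * w2 x + a2 x * f1 x)) (at x)"
      by (intro DERIV_diff DERIV_mult df1 df2 dw1 dw2)
    thus ?thesis by (simp add: algebra_simps)
  qed
  have dh: "(h has_real_derivative h1 x) (at x)" for x
    unfolding h_def h1_def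
    by (rule DERIV_divide[OF dN dq]) (use qpos[of x] in auto)
  have "\<exists>D. (h1 has_real_derivative D) (at u1)"
    unfolding h1_def
    by (rule exI, (rule DERIV_divide DERIV_diff DERIV_add DERIV_cmult DERIV_mult dg1 dg2 df1 df2 dw1 dw2 da1 da2 dq)+,
       use qpos[of u1] in simp)
  then obtain h2 where dh1: "(h1 has_real_derivative h2) (at u1)" by blast
  define r1 where "r1 x = (w1 x * a1 x + w2 x * a2 x) / r x" for x
  have dr: "(r has_real_derivative r1 x) (at x)" for x
  proof -
    have "((\<lambda>x. sqrt (q x)) has_real_derivative inverse (sqrt (q x)) / 2 * (2*(w1 x * a1 x + w2 x * a2 x))) (at x)"
      by (rule DERIV_chain2[OF DERIV_real_sqrt[OF qpos] dq])
    moreover have "inverse (sqrt (q x)) / 2 * (2*(w1 x * a1 x + w2 x * a2 x)) = r1 x"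
      unfolding r1_def r_def using qpos[of x] by (simp add: field_simps)
    ultimately show ?thesis unfolding r_def[abs_def] by (rule DERIV_cong)
  qed
  define r2 where "r2 = ((a1 u1 ^ 2 + a2 u1 ^ 2 + w1 u1 * b1 u1 + w2 u1 * b2 u1) - (r1 u1)^2) / r u1"
  have dr1: "(r1 has_real_derivative r2) (at u1)"
  proof -
    have "((\<lambda>x. (w1 x * a1 x + w2 x * a2 x) / r x) has_real_derivative
       (((a1 u1 * a1 u1 + b1 u1 * w1 u1) + (a2 u1 * a2 u1 + b2 u1 * w2 u1)) * r u1 - (w1 u1 * a1 u1 + w2 u1 * a2 u1) * r1 u1) / (r u1 * r u1)) (at u1)"
      by (intro DERIV_divide DERIV_add DERIV_mult dw1 dw2 da1 da2 dr) (use rpos[of u1] in simp)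
    moreover have "(((a1 u1 * a1 u1 + b1 u1 * w1 u1) + (a2 u1 * a2 u1 + b2 u1 * w2 u1)) * r u1 - (w1 u1 * a1 u1 + w2 u1 * a2 u1) * r1 u1) / (r u1 * r u1) = r2"
      unfolding r2_def r1_def using rpos[of u1] by (simp add: field_simps power2_eq_square)
    ultimately show ?thesis unfolding r1_def[abs_def] by simp
  qed
  define V' where "V' x = h1 x * r x + r1 x * h x" for x
  have dV: "((\<lambda>x. h x * r x) has_real_derivative V' x) (at x)" for x
    unfolding V'_def by (intro DERIV_mult dh dr)
  have dV': "(V' has_real_derivative (h2 * r u1 + r1 u1 * h1 u1) + (r2 * h u1 + h1 u1 * r1 u1)) (at u1)"
    unfolding V'_def[abs_def] by (intro DERIV_add DERIV_mult dh dr dh1 dr1)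
  have mxV: "h x * r x \<le> h u1 * r u1" for x using mx[of x] hK[of x] hK[of u1] by simp
  have D2: "(h2 * r u1 + r1 u1 * h1 u1) + (r2 * h u1 + h1 u1 * r1 u1) \<le> 0"
    by (rule second_deriv_max[OF dV dV' mxV])
  have V1: "V' u1 = 0"
    using DERIV_local_max[OF dV[of u1], of 1] mxV by auto
  have g1eq: "g1 x = -(h1 x * w2 x + a2 x * h x)" for x
  proof -
    have "((\<lambda>x. - (h x * w2 x)) has_real_derivative -(h1 x * w2 x + a2 x * h x)) (at x)"
      by (intro DERIV_minus DERIV_mult dh dw2)
    moreover have "(\<lambda>x. - (h x * w2 x)) = f1" using f1h by auto
    ultimately show ?thesis using df1[of x] DERIV_unique by metis
  qed
  have g2eq: "g2 x = h1 x * w1 x + a1 x * h x" for x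
  proof -
    have "((\<lambda>x. h x * w1 x) has_real_derivative h1 x * w1 x + a1 x * h x) (at x)"
      by (intro DERIV_mult dh dw1)
    moreover have "(\<lambda>x. h x * w1 x) = f2" using f2h by auto
    ultimately show ?thesis using df2[of x] DERIV_unique by metis
  qed
  have k1eq: "k1 u1 = -((h2 * w2 u1 + a2 u1 * h1 u1) + (b2 u1 * h u1 + h1 u1 * a2 u1))"
  proof -
    have "((\<lambda>x. -(h1 x * w2 x + a2 x * h x)) has_real_derivative
        -((h2 * w2 u1 + a2 u1 * h1 u1) + (b2 u1 * h u1 + h1 u1 * a2 u1))) (at u1)"
      by (intro DERIV_minus DERIV_add DERIV_mult dh dw2 dh1 da2)
    moreover have "(\<lambda>x. -(h1 x * w2 x + a2 x * h x)) = g1" using g1eq by auto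
    ultimately show ?thesis using dg1[of u1] DERIV_unique by metis
  qed
  have k2eq: "k2 u1 = (h2 * w1 u1 + a1 u1 * h1 u1) + (b1 u1 * h u1 + h1 u1 * a1 u1)"
  proof -
    have "((\<lambda>x. h1 x * w1 x + a1 x * h x) has_real_derivative
        (h2 * w1 u1 + a1 u1 * h1 u1) + (b1 u1 * h u1 + h1 u1 * a1 u1)) (at u1)"
      by (intro DERIV_add DERIV_mult dh dw1 dh1 da1)
    moreover have "(\<lambda>x. h1 x * w1 x + a1 x * h x) = g2" using g2eq by auto
    ultimately show ?thesis using dg2[of u1] DERIV_unique by metis
  qed
  have rsq: "r u1 ^ 2 = w1 u1 ^ 2 + w2 u1 ^ 2" using rq[of u1] q_def by simp
  have V1': "h1 u1 * r u1 + h u1 * ((w1 u1 * a1 u1 + w2 u1 * a2 u1) / r u1) = 0"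
    using V1 unfolding V'_def r1_def by (simp add: algebra_simps)
  have eq: "((g1 u1*a2 u1 - g2 u1*a1 u1) + (w1 u1*k2 u1 - w2 u1*k1 u1))/r u1^3 - 3*(w1 u1*a2 u1 - w2 u1*a1 u1)*(w1 u1*g1 u1+w2 u1*g2 u1)/r u1^5
       = (h2 * r u1 + 2*h1 u1*((w1 u1*a1 u1+w2 u1*a2 u1)/r u1) + h u1 * (((a1 u1^2+a2 u1^2+w1 u1*b1 u1+w2 u1*b2 u1) - ((w1 u1*a1 u1+w2 u1*a2 u1)/r u1)^2)/r u1)) / r u1^2
         + ((w1 u1*a2 u1 - w2 u1*a1 u1)/r u1^3)^2 * (h u1*r u1)"
    by (rule alg2[OF rpos[of u1] rsq V1']) (simp_all add: g1eq g2eq k1eq k2eq algebra_simps)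
  have num: "h2 * r u1 + 2*h1 u1*((w1 u1*a1 u1+w2 u1*a2 u1)/r u1) + h u1 * (((a1 u1^2+a2 u1^2+w1 u1*b1 u1+w2 u1*b2 u1) - ((w1 u1*a1 u1+w2 u1*a2 u1)/r u1)^2)/r u1) \<le> 0"
    using D2 unfolding r2_def r1_def by (simp add: algebra_simps)
  have Ku: "(w1 u1*a2 u1 - w2 u1*a1 u1)/r u1^3 = K u1"
    using Kdef[of u1] nW[of u1] by (simp add: cr_def w1_def w2_def a1_def a2_def)
  have L: "(cr (G u1) (A u1) + cr (W u1) (H u1)) / norm (W u1) ^ 3
          - 3 * cr (W u1) (A u1) * dt (W u1) (G u1) / norm (W u1) ^ 5
       = ((g1 u1*a2 u1 - g2 u1*a1 u1) + (w1 u1*k2 u1 - w2 u1*k1 u1))/r u1^3 - 3*(w1 u1*a2 u1 - w2 u1*a1 u1)*(w1 u1*g1 u1+w2 u1*g2 u1)/r u1^5"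
    unfolding nW by (simp add: cr_def dt_def w1_def w2_def a1_def a2_def g1_def g2_def k1_def k2_def)
  have "(h2 * r u1 + 2*h1 u1*((w1 u1*a1 u1+w2 u1*a2 u1)/r u1) + h u1 * (((a1 u1^2+a2 u1^2+w1 u1*b1 u1+w2 u1*b2 u1) - ((w1 u1*a1 u1+w2 u1*a2 u1)/r u1)^2)/r u1)) / r u1^2 \<le> 0"
    using num rpos[of u1] by (simp add: divide_nonpos_pos)
  thus ?thesis unfolding L eq Ku using hK[of u1] by simp
qed



lemma not_bot_Ico: fixes t T :: real assumes "0 \<le> t" "t < T" shows "at t within {0..<T} \<noteq> bot"
proof
  assume b: "at t within {0..<T} = bot"
  have "at t within {t..(t+T)/2} \<le> at t within {0..<T}" by (rule at_le) (use assms in auto)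
  moreover have "at t within {t..(t+T)/2} = at_right t" by (rule at_within_Icc_at_right) (use assms in auto)
  ultimately show False using b trivial_limit_at_right_real[of t] by (simp add: bot_unique)
qed

lemma alg_kt: fixes r X C D :: real assumes "r > 0"
  shows "(X * (r^2 * r) - C * (2*D * r + inverse r / 2 * (2*D) * r^2))/((r^2*r)*(r^2*r)) = X/r^3 - 3*C*D/r^5"
  using assms by (simp add: field_simps power2_eq_square power3_eq_cube) (simp add: power_def algebra_simps)

lemma kapf_deriv:
  fixes W A :: "real \<Rightarrow> complex"
  assumes dW: "(W has_vector_derivative G) (at t within S)"
    and dA: "(A has_vector_derivative H) (at t within S)"
    and nz: "W t \<noteq> 0"
  shows "((\<lambda>s. cr (W s) (A s) / norm (W s)^3) has_real_derivative
     ((cr G (A t) + cr (W t) H)/norm(W t)^3 - 3 * cr (W t) (A t) * dt (W t) G / norm (W t)^5)) (at t within S)"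
proof -
  define q where "q s = Re (W s) ^ 2 + Im (W s) ^ 2" for s
  have nq: "norm (W s) ^ 3 = q s * sqrt (q s)" for s
    unfolding q_def cmod_def by (simp add: power3_eq_cube power2_eq_square)
  have qpos: "q t > 0" using nz unfolding q_def
    by (metis complex_eq_iff sum_power2_gt_zero_iff zero_complex.simps)
  have d1: "((\<lambda>s. Re (W s)) has_real_derivative Re G) (at t within S)" using has_field_derivative_Re[OF dW] .
  have d2: "((\<lambda>s. Im (W s)) has_real_derivative Im G) (at t within S)" using has_field_derivative_Im[OF dW] .
  have d3: "((\<lambda>s. Re (A s)) has_real_derivative Re H) (at t within S)" using has_field_derivative_Re[OF dA] .
  have d4: "((\<lambda>s. Im (A s)) has_real_derivative Im H) (at t within S)" using has_field_derivative_Im[OF dA] .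
  have dq: "(q has_real_derivative 2 * dt (W t) G) (at t within S)"
  proof -
    have "((\<lambda>s. Re (W s) * Re (W s) + Im (W s) * Im (W s)) has_real_derivative
      (Re G * Re (W t) + Re G * Re (W t)) + (Im G * Im (W t) + Im G * Im (W t))) (at t within S)"
      by (intro DERIV_add DERIV_mult d1 d2)
    thus ?thesis unfolding q_def[abs_def] dt_def by (simp add: power2_eq_square algebra_simps)
  qed
  have dsq: "((\<lambda>s. sqrt (q s)) has_real_derivative inverse (sqrt (q t)) / 2 * (2 * dt (W t) G)) (at t within S)"
    by (rule DERIV_chain2[OF DERIV_real_sqrt[OF qpos] dq])
  have dden: "((\<lambda>s. q s * sqrt (q s)) has_real_derivative
      2 * dt (W t) G * sqrt (q t) + inverse (sqrt (q t)) / 2 * (2 * dt (W t) G) * q t) (at t within S)"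
    by (intro DERIV_mult dq dsq)
  have dcr: "((\<lambda>s. cr (W s) (A s)) has_real_derivative cr G (A t) + cr (W t) H) (at t within S)"
  proof -
    have "((\<lambda>s. Re (W s) * Im (A s) - Im (W s) * Re (A s)) has_real_derivative
      (Re G * Im (A t) + Im H * Re (W t)) - (Im G * Re (A t) + Re H * Im (W t))) (at t within S)"
      by (intro DERIV_diff DERIV_mult d1 d2 d3 d4)
    thus ?thesis unfolding cr_def by (simp add: algebra_simps)
  qed
  have "((\<lambda>s. cr (W s) (A s) / (q s * sqrt (q s))) has_real_derivative
     ((cr G (A t) + cr (W t) H) * (q t * sqrt (q t)) - cr (W t) (A t) *
       (2 * dt (W t) G * sqrt (q t) + inverse (sqrt (q t)) / 2 * (2 * dt (W t) G) * q t))
       / ((q t * sqrt (q t)) * (q t * sqrt (q t)))) (at t within S)"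
    by (rule DERIV_divide[OF dcr dden]) (use qpos in simp)
  note D = this
  define r where "r = sqrt (q t)"
  have e1: "sqrt (q t) = r" by (simp add: r_def)
  have e2: "q t = r^2" using qpos by (simp add: r_def)
  have rpos: "r > 0" using qpos by (simp add: r_def)
  from D have "((\<lambda>s. cr (W s) (A s) / (q s * sqrt (q s))) has_real_derivative
     ((cr G (A t) + cr (W t) H) * (r^2 * r) - cr (W t) (A t) *
       (2 * dt (W t) G * r + inverse r / 2 * (2 * dt (W t) G) * r^2))
       / ((r^2 * r) * (r^2 * r))) (at t within S)" unfolding e1 unfolding e2 .
  hence "((\<lambda>s. cr (W s) (A s) / (q s * sqrt (q s))) has_real_derivative
     ((cr G (A t) + cr (W t) H)/r^3 - 3 * cr (W t) (A t) * dt (W t) G / r^5)) (at t within S)"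
    unfolding alg_kt[OF rpos] .
  moreover have "norm (W t) = r" unfolding r_def q_def cmod_def by simp
  moreover have "(\<lambda>s. cr (W s) (A s) / norm (W s)^3) = (\<lambda>s. cr (W s) (A s) / (q s * sqrt (q s)))"
    using nq by auto
  ultimately show ?thesis by simp
qed

lemma left_limit_zero:
  fixes \<phi> :: "real \<Rightarrow> real"
  assumes c: "continuous_on {a..b} \<phi>" and ab: "a < b" and z: "\<And>t. t \<in> {a..<b} \<Longrightarrow> \<phi> t = 0"
  shows "\<phi> b = 0"
proof -
  have 1: "(\<phi> \<longlongrightarrow> \<phi> b) (at_left b)" by (rule continuous_on_Icc_at_leftD[OF c ab])
  have "eventually (\<lambda>x. \<phi> x = 0) (at_left b)"
    using eventually_at_left_real[OF ab] by eventually_elim (auto intro: z)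
  hence "eventually (\<lambda>x. \<phi> x = (\<lambda>_. 0) x) (at_left b)" by simp
  from Lim_transform_eventually[OF 1 this] have "((\<lambda>_. 0) \<longlongrightarrow> \<phi> b) (at_left b)" .
  moreover have "((\<lambda>_. 0) \<longlongrightarrow> (0::real)) (at_left b)" by simp
  ultimately show ?thesis using tendsto_unique[OF trivial_limit_at_left_real] by metis
qed

locale sol =
  fixes v :: flow_variant and n :: nat and f :: "real \<Rightarrow> real \<Rightarrow> complex" and T :: real
    and P :: "nat \<Rightarrow> nat \<Rightarrow> real \<Rightarrow> real \<Rightarrow> complex"
  assumes n1: "n \<ge> 1" and cs: "classical_solution v n f T"
    and P0: "P 0 0 = f"
    and Pc: "\<And>i j. continuous_on (UNIV \<times> {0..<T}) (\<lambda>(u,t). P i j u t)"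
    and Pu: "\<And>i j u t. t \<in> {0..<T} \<Longrightarrow> ((\<lambda>x. P i j x t) has_vector_derivative P (Suc i) j u t) (at u)"
    and Pt: "\<And>i j u t. t \<in> {0..<T} \<Longrightarrow> ((\<lambda>s. P i j u s) has_vector_derivative P i (Suc j) u t) (at t within {0..<T})"
    and A0: "area f 0 > 0"
begin

lemma Tpos: "T > 0" using cs by (simp add: classical_solution_def)

lemma fu_eq: "t \<in> {0..<T} \<Longrightarrow> fu f u t = P 1 0 u t"
  unfolding fu_def using Pu[of t 0 0 u] P0 by (simp add: vector_derivative_at)

lemma fuu_eq: "t \<in> {0..<T} \<Longrightarrow> fuu f u t = P 2 0 u t"
proof -
  assume t: "t \<in> {0..<T}"
  have "(\<lambda>x. fu f x t) = (\<lambda>x. P 1 0 x t)" using fu_eq[OF t] by auto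
  thus ?thesis unfolding fuu_def using Pu[OF t, of 1 0 u] by (simp add: vector_derivative_at numeral_2_eq_2)
qed

lemma nz: "t \<in> {0..<T} \<Longrightarrow> P 1 0 u t \<noteq> 0"
  using cs fu_eq by (auto simp: classical_solution_def)

definition N where "N u t = \<i> * (P 1 0 u t / complex_of_real (norm (P 1 0 u t)))"
definition kap where "kap u t = cr (P 1 0 u t) (P 2 0 u t) / norm (P 1 0 u t) ^ 3"
definition c where "c t = (total_curvature f t + g_term v f t) / curve_length f t"

lemma normal_eq: "t \<in> {0..<T} \<Longrightarrow> normal f u t = N u t"
  by (simp add: normal_def N_def fu_eq)

lemma curv_eq: "t \<in> {0..<T} \<Longrightarrow> curvature f u t = kap u t"
  unfolding curvature_def normal_def fu_eq fuu_eq kap_def by (rule kapf_eq)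

lemma flow_eq: assumes t: "t \<in> {0..<T}"
  shows "P 0 1 u t = complex_of_real (kap u t - c t) * N u t"
proof -
  have 1: "((\<lambda>s. f u s) has_vector_derivative
           complex_of_real (curv_tilde f u t - g_term v f t / curve_length f t) * normal f u t)
        (at t within {0..<T})" using cs t by (auto simp: classical_solution_def)
  have 2: "((\<lambda>s. f u s) has_vector_derivative P 0 1 u t) (at t within {0..<T})"
    using Pt[OF t, of 0 0 u] P0 by simp
  have "P 0 1 u t = complex_of_real (curv_tilde f u t - g_term v f t / curve_length f t) * normal f u t"
    using vector_derivative_unique_within[OF not_bot_Ico 2 1] t by auto
  moreover have "curv_tilde f u t - g_term v f t / curve_length f t = kap u t - c t"
    unfolding curv_tilde_def c_def using curv_eq[OF t] by (simp add: add_divide_distrib)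
  ultimately show ?thesis using normal_eq[OF t] by simp
qed

lemma per0: "t \<in> {0..<T} \<Longrightarrow> P 0 0 (x + 1) t = P 0 0 x t"
  using cs P0 by (auto simp: classical_solution_def)

lemma per1: assumes t: "t \<in> {0..<T}" shows "P 1 0 (x + 1) t = P 1 0 x t"
proof -
  have d: "((\<lambda>y. P 0 0 y t) has_vector_derivative P 1 0 x t) (at x)" for x
    using Pu[OF t, of 0 0 x] by simp
  show ?thesis by (rule periodic_deriv[of "\<lambda>x. P 0 0 x t", OF per0[OF t] d])
qed

lemma per2: assumes t: "t \<in> {0..<T}" shows "P 2 0 (x + 1) t = P 2 0 x t"
proof -
  have d: "((\<lambda>y. P 1 0 y t) has_vector_derivative P 2 0 x t) (at x)" for x
    using Pu[OF t, of 1 0 x] by (simp add: numeral_2_eq_2)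
  show ?thesis by (rule periodic_deriv[of "\<lambda>x. P 1 0 x t", OF per1[OF t] d])
qed

lemma kap_per1: "t \<in> {0..<T} \<Longrightarrow> kap (x + 1) t = kap x t"
  unfolding kap_def using per1[of t x] per2[of t x] by simp

lemma kap_per_nat: "t \<in> {0..<T} \<Longrightarrow> kap (x + real m) t = kap x t"
proof (induction m)
  case (Suc m)
  then show ?case using kap_per1[of t "x + real m"] by (simp add: add_ac)
qed simp

lemma kap_per: assumes t: "t \<in> {0..<T}" shows "kap u t = kap (u - of_int \<lfloor>u\<rfloor>) t"
proof (cases "\<lfloor>u\<rfloor> \<ge> 0")
  case True
  then have "u = (u - of_int \<lfloor>u\<rfloor>) + real (nat \<lfloor>u\<rfloor>)" by simp
  then show ?thesis using kap_per_nat[OF t, of "u - of_int \<lfloor>u\<rfloor>" "nat \<lfloor>u\<rfloor>"] by metis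
next
  case False
  then have "u - of_int \<lfloor>u\<rfloor> = u + real (nat (- \<lfloor>u\<rfloor>))" by simp
  then show ?thesis using kap_per_nat[OF t, of u "nat (- \<lfloor>u\<rfloor>)"] by metis
qed

lemma kap_max_all:
  assumes t: "t \<in> {0..<T}" and mx: "\<And>u. u \<in> {0..1} \<Longrightarrow> kap u t \<le> M"
  shows "kap x t \<le> M"
proof -
  have "0 \<le> x - of_int \<lfloor>x\<rfloor>" "x - of_int \<lfloor>x\<rfloor> \<le> 1" by linarith+
  hence "x - of_int \<lfloor>x\<rfloor> \<in> {0..1}" by auto
  thus ?thesis using mx kap_per[OF t, of x] by metis
qed

lemma cont_P: "continuous_on (UNIV \<times> {0..<T}) (\<lambda>p. P i j (fst p) (snd p))"
  using Pc[of i j] by (simp add: case_prod_beta)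

lemma kap_cont: "continuous_on (UNIV \<times> {0..<T}) (\<lambda>p. kap (fst p) (snd p))"
  unfolding kap_def cr_def
  by (intro continuous_intros cont_P) (use nz in \<open>auto simp del: One_nat_def\<close>)

definition KT where "KT u t = (cr (P 1 1 u t) (P 2 0 u t) + cr (P 1 0 u t) (P 2 1 u t)) / norm (P 1 0 u t) ^ 3
   - 3 * cr (P 1 0 u t) (P 2 0 u t) * dt (P 1 0 u t) (P 1 1 u t) / norm (P 1 0 u t) ^ 5"

lemma kap_dt: assumes t: "t \<in> {0..<T}"
  shows "((\<lambda>s. kap u s) has_real_derivative KT u t) (at t within {0..<T})"
proof -
  have a: "((\<lambda>s. P 1 0 u s) has_vector_derivative P 1 1 u t) (at t within {0..<T})"
    using Pt[OF t, of 1 0 u] by simp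
  have b: "((\<lambda>s. P 2 0 u s) has_vector_derivative P 2 1 u t) (at t within {0..<T})"
    using Pt[OF t, of 2 0 u] by simp
  show ?thesis unfolding kap_def KT_def by (rule kapf_deriv[OF a b nz[OF t]])
qed

lemma KT_max:
  assumes t: "t \<in> {0..<T}" and mx: "\<And>x. kap x t \<le> kap u1 t"
  shows "KT u1 t \<le> (kap u1 t)^2 * (kap u1 t - c t)"
  unfolding KT_def
proof (rule spatial[where W="\<lambda>x. P 1 0 x t" and A="\<lambda>x. P 2 0 x t" and B="\<lambda>x. P 3 0 x t"
     and F="\<lambda>x. P 0 1 x t" and G="\<lambda>x. P 1 1 x t" and H="\<lambda>x. P 2 1 x t" and K="\<lambda>x. kap x t"])
  show "((\<lambda>x. P 1 0 x t) has_vector_derivative P 2 0 x t) (at x)" for x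
    using Pu[OF t, of 1 0 x] by (simp add: numeral_2_eq_2)
  show "((\<lambda>x. P 2 0 x t) has_vector_derivative P 3 0 x t) (at x)" for x
    using Pu[OF t, of 2 0 x] by (simp add: numeral_3_eq_3 numeral_2_eq_2)
  show "((\<lambda>x. P 0 1 x t) has_vector_derivative P 1 1 x t) (at x)" for x
    using Pu[OF t, of 0 1 x] by simp
  show "((\<lambda>x. P 1 1 x t) has_vector_derivative P 2 1 x t) (at x)" for x
    using Pu[OF t, of 1 1 x] by (simp add: numeral_2_eq_2)
  show "P 1 0 x t \<noteq> 0" for x using nz[OF t] .
  show "P 0 1 x t = complex_of_real (kap x t - c t) * (\<i> * (P 1 0 x t / complex_of_real (norm (P 1 0 x t))))" for x
    using flow_eq[OF t, of x] by (simp add: N_def)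
  show "kap x t = cr (P 1 0 x t) (P 2 0 x t) / (norm (P 1 0 x t))^3" for x by (simp add: kap_def)
  show "kap x t \<le> kap u1 t" for x by (rule mx)
qed

lemma cont_u: assumes t: "t \<in> {0..<T}" shows "continuous_on S (\<lambda>u. P i j u t)"
proof -
  have "continuous_on S (\<lambda>u. (\<lambda>p. P i j (fst p) (snd p)) (u, t))"
    by (rule continuous_on_compose2[OF cont_P[of i j], of S "\<lambda>u. (u, t)"])
       (use t in \<open>auto intro!: continuous_intros\<close>)
  thus ?thesis by simp
qed

lemma cont_swap: "continuous_on ({0..<T} \<times> UNIV) (\<lambda>p. P i j (snd p) (fst p))"
proof -
  have "continuous_on ({0..<T} \<times> UNIV) (\<lambda>p. (\<lambda>p. P i j (fst p) (snd p)) (snd p, fst p))"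
    by (rule continuous_on_compose2[OF cont_P[of i j]]) (auto intro!: continuous_intros)
  thus ?thesis by simp
qed

lemma total_eq: "t \<in> {0..<T} \<Longrightarrow> total_curvature f t = 2 * pi * real n"
  using cs by (auto simp: classical_solution_def)

lemma L_eq: "t \<in> {0..<T} \<Longrightarrow> curve_length f t = integral {0..1} (\<lambda>u. norm (P 1 0 u t))"
  by (simp add: curve_length_def fu_eq)

lemma Lpos: assumes t: "t \<in> {0..<T}" shows "curve_length f t > 0"
proof -
  have cn: "continuous_on {0..1} (\<lambda>u. norm (P 1 0 u t))"
    by (intro continuous_intros cont_u[OF t])
  obtain u0 where u0: "u0 \<in> {0..1}" "\<And>y. y \<in> {0..1} \<Longrightarrow> norm (P 1 0 u0 t) \<le> norm (P 1 0 y t)"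
    using continuous_attains_inf[OF compact_Icc _ cn] by fastforce
  have m: "norm (P 1 0 u0 t) > 0" using nz[OF t] by simp
  have "integral {0..1} (\<lambda>u::real. norm (P 1 0 u0 t)) \<le> integral {0..1} (\<lambda>u. norm (P 1 0 u t))"
    by (rule Henstock_Kurzweil_Integration.integral_le) (use u0 integrable_continuous_interval[OF cn] in \<open>auto simp del: One_nat_def\<close>)
  hence "norm (P 1 0 u0 t) \<le> integral {0..1} (\<lambda>u. norm (P 1 0 u t))" by simp
  thus ?thesis using m L_eq[OF t] by linarith
qed

lemma NN: "t \<in> {0..<T} \<Longrightarrow> N u t \<bullet> N u t = 1"
proof -
  assume t: "t \<in> {0..<T}"
  have "norm (N u t) = 1" using nz[OF t, of u] by (simp add: N_def norm_mult norm_divide)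
  thus ?thesis by (simp add: dot_square_norm)
qed

lemma c_eq: assumes t: "t \<in> {0..<T}" shows "c t = kap 0 t - P 0 1 0 t \<bullet> N 0 t"
proof -
  have "P 0 1 0 t \<bullet> N 0 t = (kap 0 t - c t) * (N 0 t \<bullet> N 0 t)"
    unfolding flow_eq[OF t] scaleR_conv_of_real[symmetric] by (rule inner_scaleR_left)
  thus ?thesis using NN[OF t] by simp
qed

lemma c_pos_gen:
  assumes t: "t \<in> {0..<T}" and JP: "v = JP \<Longrightarrow> area f t > 0"
  shows "c t > 0"
proof -
  have L: "curve_length f t > 0" by (rule Lpos[OF t])
  have tot: "total_curvature f t = 2 * pi * real n" by (rule total_eq[OF t])
  have npos: "2 * pi * real n > 0" using n1 by simp
  have ceq: "c t = (total_curvature f t + g_term v f t) / curve_length f t" by (simp add: c_def)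
  show ?thesis
  proof (cases v)
    case AP then show ?thesis using L tot npos ceq by (simp add: g_term_def)
  next
    case LP
    have "0 \<le> integral {0..1} (\<lambda>u. (curv_tilde f u t)\<^sup>2 * norm (fu f u t))"
      by (cases "(\<lambda>u. (curv_tilde f u t)\<^sup>2 * norm (fu f u t)) integrable_on {0..1}")
         (auto intro!: integral_nonneg simp: not_integrable_integral)
    hence "g_term v f t \<ge> 0" using LP L tot npos by (simp add: g_term_def)
    then show ?thesis using L tot npos ceq by simp
  next
    case JP
    have A: "area f t > 0" using JP assms by simp
    have "c t = curve_length f t / (2 * area f t)"
      using JP L A tot ceq by (simp add: g_term_def field_simps power2_eq_square)
    then show ?thesis using L A by simp
  qed
qed

lemma N_cont: "continuous_on (UNIV \<times> {0..<T}) (\<lambda>p. N (fst p) (snd p))"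
  unfolding N_def
  by (intro continuous_intros cont_P) (use nz in \<open>auto simp del: One_nat_def\<close>)

lemma N_cont_swap: "continuous_on ({0..<T} \<times> UNIV) (\<lambda>p. N (snd p) (fst p))"
proof -
  have "continuous_on ({0..<T} \<times> UNIV) (\<lambda>p. (\<lambda>p. N (fst p) (snd p)) (snd p, fst p))"
    by (rule continuous_on_compose2[OF N_cont]) (auto intro!: continuous_intros)
  thus ?thesis by simp
qed

lemma L_cont: "continuous_on {0..<T} (curve_length f)"
proof -
  have "continuous_on ({0..<T} \<times> cbox 0 1) (\<lambda>(s, u). norm (P 1 0 u s))"
    using continuous_on_subset[OF cont_swap[of 1 0], of "{0..<T} \<times> cbox 0 1"]
    by (auto intro!: continuous_intros simp: case_prod_beta)
  from integral_continuous_on_param[OF this]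
  have "continuous_on {0..<T} (\<lambda>s. integral {0..1} (\<lambda>u. norm (P 1 0 u s)))" by simp
  thus ?thesis by (rule continuous_on_cong[THEN iffD1, rotated -1]) (auto simp: L_eq)
qed

lemma area_eq: "t \<in> {0..<T} \<Longrightarrow> area f t = - (1/2) * integral {0..1} (\<lambda>u. (P 0 0 u t \<bullet> N u t) * norm (P 1 0 u t))"
  by (simp add: area_def P0 normal_eq fu_eq)

lemma area_cont: "continuous_on {0..<T} (area f)"
proof -
  have "continuous_on ({0..<T} \<times> cbox 0 1) (\<lambda>(s, u). (P 0 0 u s \<bullet> N u s) * norm (P 1 0 u s))"
  proof -
    have "continuous_on ({0..<T} \<times> UNIV) (\<lambda>p. (P 0 0 (snd p) (fst p) \<bullet> N (snd p) (fst p)) * norm (P 1 0 (snd p) (fst p)))"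
      by (intro continuous_intros cont_swap N_cont_swap)
    from continuous_on_subset[OF this, of "{0..<T} \<times> cbox 0 1"] show ?thesis
      by (auto simp: case_prod_beta)
  qed
  from integral_continuous_on_param[OF this]
  have "continuous_on {0..<T} (\<lambda>s. - (1/2) * integral {0..1} (\<lambda>u. (P 0 0 u s \<bullet> N u s) * norm (P 1 0 u s)))"
    by (auto intro!: continuous_intros)
  thus ?thesis by (rule continuous_on_cong[THEN iffD1, rotated -1]) (auto simp: area_eq)
qed

lemma c_cont: "continuous_on {0..<T} c"
proof -
  have k: "continuous_on {0..<T} (\<lambda>t. kap 0 t)"
  proof -
    have "continuous_on {0..<T} (\<lambda>t. (\<lambda>p. kap (fst p) (snd p)) (0, t))"
      by (rule continuous_on_compose2[OF kap_cont]) (auto intro!: continuous_intros)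
    thus ?thesis by simp
  qed
  have p: "continuous_on {0..<T} (\<lambda>t. P i j 0 t)" for i j
  proof -
    have "continuous_on {0..<T} (\<lambda>t. (\<lambda>p. P i j (fst p) (snd p)) (0, t))"
      by (rule continuous_on_compose2[OF cont_P]) (auto intro!: continuous_intros)
    thus ?thesis by simp
  qed
  have nn: "continuous_on {0..<T} (\<lambda>t. N 0 t)"
  proof -
    have "continuous_on {0..<T} (\<lambda>t. (\<lambda>p. N (fst p) (snd p)) (0, t))"
      by (rule continuous_on_compose2[OF N_cont]) (auto intro!: continuous_intros)
    thus ?thesis by simp
  qed
  have "continuous_on {0..<T} (\<lambda>t. kap 0 t - P 0 1 0 t \<bullet> N 0 t)"
    by (intro continuous_intros k p nn)
  thus ?thesis by (rule continuous_on_cong[THEN iffD1, rotated -1]) (auto simp: c_eq)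
qed

lemma c_JP: assumes t: "t \<in> {0..<T}" and JP: "v = JP" and A: "area f t \<noteq> 0"
  shows "c t * (2 * area f t) - curve_length f t = 0"
proof -
  have L: "curve_length f t > 0" by (rule Lpos[OF t])
  have ceq: "c t = (total_curvature f t + g_term v f t) / curve_length f t" by (simp add: c_def)
  have "c t = curve_length f t / (2 * area f t)"
    using JP L A ceq by (simp add: g_term_def field_simps power2_eq_square)
  thus ?thesis using A by simp
qed

lemma area_pos: assumes JP: "v = JP" and t': "t' \<in> {0..<T}" shows "area f t' > 0"
proof (rule ccontr)
  assume "\<not> area f t' > 0"
  hence neg: "area f t' \<le> 0" by simp
  have cA: "continuous_on {0..t'} (area f)" by (rule continuous_on_subset[OF area_cont]) (use t' in auto)
  have "\<exists>x. 0 \<le> x \<and> x \<le> t' \<and> area f x = 0"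
    by (rule IVT2'[OF neg _ _ cA]) (use A0 t' in auto)
  then obtain z where z: "0 \<le> z" "z \<le> t'" "area f z = 0" by blast
  define Z where "Z = {0..t'} \<inter> area f -` {0}"
  have "closed Z" unfolding Z_def by (rule continuous_closed_preimage[OF cA]) auto
  moreover have "bounded Z" unfolding Z_def by (rule bounded_subset[of "{0..t'}"]) auto
  ultimately have cZ: "compact Z" by (simp add: compact_eq_bounded_closed)
  have nZ: "Z \<noteq> {}" using z unfolding Z_def by auto
  obtain ts where ts: "ts \<in> Z" "\<And>s. s \<in> Z \<Longrightarrow> ts \<le> s"
    using compact_attains_inf[OF cZ nZ] by blast
  have ts1: "0 \<le> ts" "ts \<le> t'" "area f ts = 0" using ts(1) unfolding Z_def by auto
  have "ts \<noteq> 0" using ts1(3) A0 by auto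
  hence tspos: "ts > 0" using ts1(1) by simp
  have before: "area f s > 0" if s: "s \<in> {0..<ts}" for s
  proof (rule ccontr)
    assume "\<not> area f s > 0"
    hence "area f s \<le> 0" by simp
    moreover have "continuous_on {0..s} (area f)" by (rule continuous_on_subset[OF area_cont]) (use s ts1 t' in auto)
    ultimately have "\<exists>x. 0 \<le> x \<and> x \<le> s \<and> area f x = 0"
      by (intro IVT2') (use A0 s in auto)
    then obtain z' where z': "0 \<le> z'" "z' \<le> s" "area f z' = 0" by blast
    hence "z' \<in> Z" using s ts1 unfolding Z_def by auto
    hence "ts \<le> z'" by (rule ts(2))
    thus False using z' s by simp
  qed
  have cphi: "continuous_on {0..ts} (\<lambda>t. c t * (2 * area f t) - curve_length f t)"
  proof -
    have sub: "{0..ts} \<subseteq> {0..<T}" using ts1 t' by auto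
    show ?thesis by (intro continuous_intros continuous_on_subset[OF c_cont sub]
       continuous_on_subset[OF area_cont sub] continuous_on_subset[OF L_cont sub])
  qed
  have "c ts * (2 * area f ts) - curve_length f ts = 0"
  proof (rule left_limit_zero[OF cphi tspos])
    fix s assume s: "s \<in> {0..<ts}"
    have "s \<in> {0..<T}" using s ts1 t' by auto
    thus "c s * (2 * area f s) - curve_length f s = 0"
      using c_JP[OF _ JP] before[OF s] by simp
  qed
  moreover have "curve_length f ts > 0" using ts1 t' by (intro Lpos) auto
  ultimately show False using ts1(3) by simp
qed

lemma c_pos: "t \<in> {0..<T} \<Longrightarrow> c t > 0"
  by (rule c_pos_gen) (auto intro: area_pos)

end


lemma y_deriv:
  fixes \<beta> t0 t :: real
  assumes g: "\<beta> - 2*(t-t0) > 0"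
  shows "((\<lambda>t. 1 / sqrt (\<beta> - 2*(t-t0))) has_real_derivative (1 / sqrt (\<beta> - 2*(t-t0)))^3) (at t within S)"
proof -
  have dg: "((\<lambda>t. \<beta> - 2*(t-t0)) has_real_derivative 0 - 2 * (1 - 0)) (at t within S)"
    by (intro DERIV_diff DERIV_cmult DERIV_ident DERIV_const)
  have ds: "((\<lambda>t. sqrt (\<beta> - 2*(t-t0))) has_real_derivative inverse (sqrt (\<beta> - 2*(t-t0))) / 2 * (0 - 2 * (1 - 0))) (at t within S)"
    by (rule DERIV_chain2[OF DERIV_real_sqrt[OF g] dg])
  have "((\<lambda>t. 1 / sqrt (\<beta> - 2*(t-t0))) has_real_derivative
     (0 * sqrt (\<beta> - 2*(t-t0)) - 1 * (inverse (sqrt (\<beta> - 2*(t-t0))) / 2 * (0 - 2 * (1 - 0)))) /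
       (sqrt (\<beta> - 2*(t-t0)) * sqrt (\<beta> - 2*(t-t0)))) (at t within S)"
    by (rule DERIV_divide[OF DERIV_const ds]) (use g in simp)
  moreover have "(0 * sqrt (\<beta> - 2*(t-t0)) - 1 * (inverse (sqrt (\<beta> - 2*(t-t0))) / 2 * (0 - 2 * (1 - 0)))) /
       (sqrt (\<beta> - 2*(t-t0)) * sqrt (\<beta> - 2*(t-t0))) = (1 / sqrt (\<beta> - 2*(t-t0)))^3"
    using g by (simp add: field_simps power3_eq_cube)
  ultimately show ?thesis by simp
qed

lemma left_limit_le:
  fixes \<phi> :: "real \<Rightarrow> real"
  assumes c: "continuous_on {a..b} \<phi>" and ab: "a < b" and z: "\<And>t. t \<in> {a..<b} \<Longrightarrow> \<phi> t \<le> 0"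
  shows "\<phi> b \<le> 0"
proof -
  have 1: "(\<phi> \<longlongrightarrow> \<phi> b) (at_left b)" by (rule continuous_on_Icc_at_leftD[OF c ab])
  have "eventually (\<lambda>x. \<phi> x \<le> 0) (at_left b)"
    using eventually_at_left_real[OF ab] by eventually_elim (auto intro: z)
  thus ?thesis using tendsto_upperbound[OF 1 _ trivial_limit_at_left_real] by blast
qed

context sol begin

lemma kap_cont_u: assumes t: "t \<in> {0..<T}" shows "continuous_on S (\<lambda>u. kap u t)"
proof -
  have "continuous_on S (\<lambda>u. (\<lambda>p. kap (fst p) (snd p)) (u, t))"
    by (rule continuous_on_compose2[OF kap_cont, of S "\<lambda>u. (u, t)"])
       (use t in \<open>auto intro!: continuous_intros\<close>)
  thus ?thesis by simp
qed

lemma kap_cont_t: "continuous_on S' (\<lambda>t. kap u t)" if "S' \<subseteq> {0..<T}"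
proof -
  have "continuous_on S' (\<lambda>t. (\<lambda>p. kap (fst p) (snd p)) (u, t))"
    by (rule continuous_on_compose2[OF kap_cont, of S' "\<lambda>t. (u, t)"])
       (use that in \<open>auto intro!: continuous_intros\<close>)
  thus ?thesis by simp
qed

lemma bdd: "t \<in> {0..<T} \<Longrightarrow> bdd_above ((\<lambda>u. kap u t) ` {0..1})"
  by (intro bounded_imp_bdd_above compact_imp_bounded compact_continuous_image kap_cont_u compact_Icc)

lemma MC_eq: "t \<in> {0..<T} \<Longrightarrow> max_curvature f t = (SUP u\<in>{0..1}. kap u t)"
  unfolding max_curvature_def by (rule SUP_cong) (auto simp: curv_eq)

lemma kap_le_MC: "t \<in> {0..<T} \<Longrightarrow> u \<in> {0..1} \<Longrightarrow> kap u t \<le> max_curvature f t"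
  unfolding MC_eq by (rule cSUP_upper[OF _ bdd])

lemma MC_le: "t \<in> {0..<T} \<Longrightarrow> (\<And>u. u \<in> {0..1} \<Longrightarrow> kap u t \<le> M) \<Longrightarrow> max_curvature f t \<le> M"
  unfolding MC_eq by (rule cSUP_least) auto


lemma no_touch:
  fixes \<beta> t0 :: real
  assumes t0: "t0 \<in> {0..<T}" and m: "\<beta> - 2*(T-t0) > 0"
    and init: "\<And>u. u \<in> {0..1} \<Longrightarrow> kap u t0 < 1 / sqrt \<beta>"
  shows "\<forall>t\<in>{t0..<T}. \<forall>u\<in>{0..1}. kap u t < 1 / sqrt (\<beta> - 2*(t-t0))"
proof (rule ccontr)
  define y where "y t = 1 / sqrt (\<beta> - 2*(t-t0))" for t
  assume "\<not> ?thesis"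
  then obtain t2 u2 where t2: "t2 \<in> {t0..<T}" and u2: "u2 \<in> {0..1}" and ge2: "y t2 \<le> kap u2 t2"
    unfolding y_def by force
  have gpos: "\<beta> - 2*(t-t0) > 0" if "t \<le> T" for t using m that by simp
  have ypos: "y t > 0" if "t \<le> T" for t using gpos[OF that] by (simp add: y_def)
  have dy: "(y has_real_derivative (y t)^3) (at t within S)" if "t \<le> T" for t S
    unfolding y_def[abs_def] by (rule y_deriv[OF gpos[OF that]])
  have ycont: "continuous_on S y" if "S \<subseteq> {..T}" for S
    by (rule DERIV_continuous_on[OF dy]) (use that in auto)
  have sub2: "{t0..t2} \<subseteq> {0..<T}" using t0 t2 by auto
  define \<psi> where "\<psi> p = kap (fst p) (snd p) - y (snd p)" for p
  have cpsi: "continuous_on ({0..1} \<times> {t0..t2}) \<psi>"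
  proof -
    have "continuous_on ({0..1} \<times> {t0..t2}) (\<lambda>p. kap (fst p) (snd p))"
      by (rule continuous_on_subset[OF kap_cont]) (use sub2 in auto)
    moreover have "continuous_on ({0..1} \<times> {t0..t2}) (\<lambda>p. y (snd p))"
      by (rule continuous_on_compose2[OF ycont[of "{t0..t2}"]]) (use t2 in \<open>auto intro!: continuous_intros\<close>)
    ultimately show ?thesis unfolding \<psi>_def by (intro continuous_intros)
  qed
  define Q where "Q = ({0..1} \<times> {t0..t2}) \<inter> \<psi> -` {0..}"
  have "closed Q" unfolding Q_def by (rule continuous_closed_preimage[OF cpsi]) (auto intro: closed_Times)
  moreover have "bounded Q" unfolding Q_def
    by (rule bounded_subset[of "{0..1} \<times> {t0..t2}"]) (auto intro: bounded_Times)
  ultimately have "compact Q" by (simp add: compact_eq_bounded_closed)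
  hence cS: "compact (snd ` Q)" by (intro compact_continuous_image continuous_intros)
  have nS: "snd ` Q \<noteq> {}" using u2 t2 ge2 unfolding Q_def \<psi>_def by force
  obtain t1 where t1S: "t1 \<in> snd ` Q" and t1min: "\<And>s. s \<in> snd ` Q \<Longrightarrow> t1 \<le> s"
    using compact_attains_inf[OF cS nS] by blast
  obtain u' where u'Q: "(u', t1) \<in> Q" using t1S by force
  have u': "u' \<in> {0..1}" "t1 \<in> {t0..t2}" "y t1 \<le> kap u' t1"
    using u'Q unfolding Q_def \<psi>_def by auto
  have t1T: "t1 \<in> {0..<T}" using u'(2) sub2 by auto
  have before: "kap u t < y t" if "t \<in> {t0..<t1}" "u \<in> {0..1}" for t u
  proof (rule ccontr)
    assume "\<not> kap u t < y t"
    hence "(u, t) \<in> Q" using that u'(2) unfolding Q_def \<psi>_def by auto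
    hence "t1 \<le> t" using t1min by force
    thus False using that by simp
  qed
  have yt0: "y t0 = 1 / sqrt \<beta>" by (simp add: y_def)
  have t01: "t0 < t1"
  proof (rule ccontr)
    assume "\<not> t0 < t1"
    hence "t1 = t0" using u'(2) by simp
    thus False using init[OF u'(1)] u'(3) yt0 by simp
  qed
  have cu: "continuous_on {0..1} (\<lambda>u. kap u t1)" by (rule kap_cont_u[OF t1T])
  obtain u1 where u1: "u1 \<in> {0..1}" and u1max: "\<And>u. u \<in> {0..1} \<Longrightarrow> kap u t1 \<le> kap u1 t1"
    using continuous_attains_sup[OF compact_Icc _ cu] by fastforce
  have mx: "kap x t1 \<le> kap u1 t1" for x by (rule kap_max_all[OF t1T u1max])
  define \<phi> where "\<phi> s = kap u1 s - y s" for s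
  have subl: "{t0..t1} \<subseteq> {0..<T}" using t0 t1T by auto
  have cphi: "continuous_on {t0..t1} \<phi>" unfolding \<phi>_def
    by (intro continuous_intros kap_cont_t[OF subl] ycont) (use t1T in auto)
  have "\<phi> t1 \<le> 0"
    by (rule left_limit_le[OF cphi t01]) (use before u1 in \<open>auto simp: \<phi>_def less_imp_le\<close>)
  moreover have "\<phi> t1 \<ge> 0" using u'(3) u1max[OF u'(1)] unfolding \<phi>_def by simp
  ultimately have eq: "kap u1 t1 = y t1" unfolding \<phi>_def by simp
  have dphi: "(\<phi> has_real_derivative KT u1 t1 - (y t1)^3) (at t1 within {0..<T})"
    unfolding \<phi>_def[abs_def] by (intro DERIV_diff kap_dt[OF t1T] dy) (use t1T in simp)
  have KTge: "KT u1 t1 \<ge> (y t1)^3"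
  proof (rule ccontr)
    assume "\<not> ?thesis"
    hence "KT u1 t1 - (y t1)^3 < 0" by simp
    from has_real_derivative_neg_dec_left[OF dphi this] obtain d where d: "d > 0"
      and dec: "\<And>h. h > 0 \<Longrightarrow> t1 - h \<in> {0..<T} \<Longrightarrow> h < d \<Longrightarrow> \<phi> t1 < \<phi> (t1 - h)" by blast
    define h where "h = min (d/2) ((t1 - t0)/2)"
    have h1: "h \<le> (t1 - t0)/2" "h \<le> d/2" unfolding h_def by (rule min.cobounded2, rule min.cobounded1)
    have h0: "h > 0" using d t01 by (simp add: h_def)
    have h: "h > 0" "h < d" "t1 - h \<in> {t0..<t1}" using d t01 h1 h0 by auto
    have "t1 - h \<in> {t0..t1}" using h(3) by auto
    hence "t1 - h \<in> {0..<T}" using subl by blast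
    from dec[OF h(1) this h(2)] have "\<phi> t1 < \<phi> (t1 - h)" .
    moreover have "\<phi> (t1 - h) < 0" using before[OF h(3) u1] by (simp add: \<phi>_def)
    moreover have "\<phi> t1 = 0" using eq by (simp add: \<phi>_def)
    ultimately show False by simp
  qed
  have "KT u1 t1 \<le> (kap u1 t1)^2 * (kap u1 t1 - c t1)" by (rule KT_max[OF t1T mx])
  moreover have "c t1 > 0" by (rule c_pos[OF t1T])
  moreover have "kap u1 t1 > 0" using eq ypos[of t1] t1T by simp
  ultimately have "KT u1 t1 < (kap u1 t1)^3"
  proof -
    assume a: "KT u1 t1 \<le> (kap u1 t1)^2 * (kap u1 t1 - c t1)" "c t1 > 0" "kap u1 t1 > 0"
    have "(kap u1 t1)^2 * c t1 > 0" using a by simp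
    moreover have "(kap u1 t1)^2 * (kap u1 t1 - c t1) = (kap u1 t1)^3 - (kap u1 t1)^2 * c t1"
      by (simp add: algebra_simps power2_eq_square power3_eq_cube)
    ultimately show ?thesis using a(1) by linarith
  qed
  thus False using KTge eq by simp
qed


lemma main_loc:
  assumes Ls: "Limsup (at_left T) (\<lambda>t. ereal (max_curvature f t)) = \<infinity>" and t0: "t0 \<in> {0..<T}"
  shows "max_curvature f t0 \<ge> 1 / sqrt (2 * (T - t0))"
proof (rule ccontr)
  define K0 where "K0 = max_curvature f t0"
  define B where "B = 1 / sqrt (2 * (T - t0))"
  assume "\<not> ?thesis"
  hence KB: "K0 < B" unfolding K0_def B_def by simp
  have Tt: "T - t0 > 0" using t0 by simp
  have Bpos: "B > 0" using Tt by (simp add: B_def)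
  define y0 where "y0 = (max K0 (B/2) + B) / 2"
  have y0: "K0 < y0" "0 < y0" "y0 < B" using KB Bpos by (auto simp: y0_def max_def)
  define \<beta> where "\<beta> = 1 / y0^2"
  have sb: "1 / sqrt \<beta> = y0" using y0 by (simp add: \<beta>_def real_sqrt_divide)
  have "y0^2 < B^2" using y0 by (simp add: power_strict_mono)
  also have "B^2 = 1 / (2 * (T - t0))" using Tt by (simp add: B_def power_divide)
  finally have "y0^2 * (2 * (T - t0)) < 1" using Tt by (simp add: field_simps)
  hence m: "\<beta> - 2*(T-t0) > 0" using y0 by (simp add: \<beta>_def field_simps)
  have init: "kap u t0 < 1 / sqrt \<beta>" if "u \<in> {0..1}" for u
    using kap_le_MC[OF t0 that] y0 sb unfolding K0_def by simp
  note nt = no_touch[OF t0 m init]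
  define M where "M = 1 / sqrt (\<beta> - 2*(T-t0))"
  have bound: "max_curvature f t \<le> M" if t: "t \<in> {t0<..<T}" for t
  proof -
    have tT: "t \<in> {0..<T}" using t t0 by auto
    have "1 / sqrt (\<beta> - 2*(t-t0)) \<le> M" unfolding M_def
      using m t by (intro divide_left_mono real_sqrt_le_mono mult_pos_pos) auto
    moreover have "max_curvature f t \<le> 1 / sqrt (\<beta> - 2*(t-t0))"
      by (rule MC_le[OF tT]) (use nt t in \<open>auto intro: less_imp_le\<close>)
    ultimately show ?thesis by linarith
  qed
  have "eventually (\<lambda>t. ereal (max_curvature f t) \<le> ereal M) (at_left T)"
    using eventually_at_left_real[of t0 T] t0
    by (auto elim!: eventually_mono intro: bound)
  hence "Limsup (at_left T) (\<lambda>t. ereal (max_curvature f t)) \<le> ereal M" by (rule Limsup_bounded)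
  thus False using Ls by simp
qed

end

theorem mainTheorem16:
  fixes v :: flow_variant and n :: nat and f :: "real \<Rightarrow> real \<Rightarrow> complex" and T :: real
  assumes "n \<ge> 1"
    and "maximal_solution v n f T"
    and "area f 0 > 0"
    and "Limsup (at_left T) (\<lambda>t. ereal (max_curvature f t)) = \<infinity>"
  shows "\<forall>t \<in> {0..<T}. max_curvature f t \<ge> 1 / sqrt (2 * (T - t))"
proof -
  have cs: "classical_solution v n f T" using assms(2) by (simp add: maximal_solution_def)
  then obtain P :: "nat \<Rightarrow> nat \<Rightarrow> real \<Rightarrow> real \<Rightarrow> complex" where
    P0: "P 0 0 = f" and
    Pc: "\<forall>i j. continuous_on (UNIV \<times> {0..<T}) (\<lambda>(u,t). P i j u t)" and
    Pu: "\<forall>i j u t. t \<in> {0..<T} \<longrightarrow> ((\<lambda>x. P i j x t) has_vector_derivative P (Suc i) j u t) (at u)" and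
    Pt: "\<forall>i j u t. t \<in> {0..<T} \<longrightarrow> ((\<lambda>s. P i j u s) has_vector_derivative P i (Suc j) u t) (at t within {0..<T})"
    unfolding classical_solution_def smooth_family_def by blast
  interpret sol v n f T P
    by unfold_locales (use assms(1,3) cs P0 Pc Pu Pt in auto)
  show ?thesis using main_loc[OF assms(4)] by blast
qed


end
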